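(* The singular locus of $O$ has ten irreducible components. The component $S_{(x_0,x_1)}$ is given by $$x_0-x_1=0,\qquad x_2^2+x_3^2+x_4^2-2x_2x_3-2x_2x_4-2x_3x_4=0$$ (and $w=0$), and the other nine components $S_{(x_i,x_j)}$, $0\le i<j\le4$, are obtained from it by permuting the coordinates $x_0,\ldots,x_4$.
   Context: Let $$\Delta'(x_0,\ldots,x_4):=\prod_{i_1,\ldots,i_4\in\{0,1\}}\big(\sqrt{x_0}+(-1)^{i_1}\sqrt{x_1}+(-1)^{i_2}\sqrt{x_2}+(-1)^{i_3}\sqrt{x_3}+(-1)^{i_4}\sqrt{x_4}\big)\in\mathbb{Q}[x_0,\ldots,x_4],$$ a symmetric form of degree $8$. $O$ is the double covering $\pi:O\to\mathbf{P}^4_{\mathbb{Q}}$ given by $w^2=(-3)\Delta'(x_0,\ldots,x_4)$, i.e. the hypersurface with this equation in the weighted projective space $\mathbf{P}(4,1,1,1,1,1)$ with coordinates $w,x_0,\ldots,x_4$, with $\pi$ the projection to $(x_0:\ldots:x_4)$. *)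

theory Defs
  imports "HOL-Analysis.Analysis" "HOL-Library.Numeral_Type"
begin

(* Points of the affine cone C^6 over the weighted projective space P(4,1,1,1,1,1):
   a point is a pair (w, x) with x :: complex^5; the coordinate x_i (0 <= i <= 4)
   is  x $ of_nat i. *)
type_synonym pt = "complex \<times> (complex ^ 5)"

definition xc :: "complex ^ 5 \<Rightarrow> nat \<Rightarrow> complex" where
  "xc x i = x $ (of_nat i :: 5)"

definition sgn_b :: "bool \<Rightarrow> complex" where
  "sgn_b b = (if b then -1 else 1)"

(* Delta'(x_0,...,x_4) = prod over sign choices of
   sqrt x0 +- sqrt x1 +- sqrt x2 +- sqrt x3 +- sqrt x4  (independent of the choice of roots) *)
definition Delta' :: "complex ^ 5 \<Rightarrow> complex" where
  "Delta' x = (\<Prod>(a,b,c,d)\<in>(UNIV :: (bool \<times> bool \<times> bool \<times> bool) set).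
      csqrt (xc x 0) + sgn_b a * csqrt (xc x 1) + sgn_b b * csqrt (xc x 2)
      + sgn_b c * csqrt (xc x 3) + sgn_b d * csqrt (xc x 4))"

definition F_O :: "pt \<Rightarrow> complex" where
  "F_O p = (fst p)^2 - (-3) * Delta' (snd p)"

definition coord_dirs :: "pt set" where
  "coord_dirs = {(1, 0)} \<union> {(0, axis k 1) | k. True}"

definition sing_cone_O :: "pt set" where
  "sing_cone_O = {p. F_O p = 0 \<and>
      (\<forall>e\<in>coord_dirs. ((\<lambda>t::complex. F_O (fst p + t * fst e, snd p + t *s snd e)) has_field_derivative 0) (at 0))}"

inductive_set poly_fun :: "(pt \<Rightarrow> complex) set" where
  pconst: "(\<lambda>p. c) \<in> poly_fun"
| pw: "(\<lambda>p. fst p) \<in> poly_fun"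
| px: "(\<lambda>p. snd p $ k) \<in> poly_fun"
| padd: "f \<in> poly_fun \<Longrightarrow> g \<in> poly_fun \<Longrightarrow> (\<lambda>p. f p + g p) \<in> poly_fun"
| pmult: "f \<in> poly_fun \<Longrightarrow> g \<in> poly_fun \<Longrightarrow> (\<lambda>p. f p * g p) \<in> poly_fun"

definition zariski_closed :: "pt set \<Rightarrow> bool" where
  "zariski_closed A \<longleftrightarrow> (\<exists>P \<subseteq> poly_fun. A = {p. \<forall>f\<in>P. f p = 0})"

definition zariski_irreducible :: "pt set \<Rightarrow> bool" where
  "zariski_irreducible S \<longleftrightarrow> S \<noteq> {} \<and>
     (\<forall>A B. zariski_closed A \<longrightarrow> zariski_closed B \<longrightarrow> S \<subseteq> A \<union> B \<longrightarrow> S \<subseteq> A \<or> S \<subseteq> B)"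

definition S_comp :: "nat \<Rightarrow> nat \<Rightarrow> pt set" where
  "S_comp i j = {(w, x). w = 0 \<and> xc x i = xc x j \<and>
      (let R = {0..<5} - {i, j} in
        (\<Sum>k\<in>R. (xc x k)^2) - (\<Sum>k\<in>R. \<Sum>l\<in>R - {k}. xc x k * xc x l) = 0)}"

end

theory Submission
  imports Defs
begin


definition sx :: "complex^5 \<Rightarrow> nat \<Rightarrow> complex" where "sx x l = csqrt (xc x l)"

definition sgv :: "bool\<times>bool\<times>bool\<times>bool \<Rightarrow> nat \<Rightarrow> complex" where
  "sgv e l = (case e of (a,b,c,d) \<Rightarrow>
     (if l = 0 then 1 else if l = 1 then sgn_b a else if l = 2 then sgn_b b else if l = 3 then sgn_b c else sgn_b d))"

definition Lf :: "(nat \<Rightarrow> complex) \<Rightarrow> (nat \<Rightarrow> complex) \<Rightarrow> complex" where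
  "Lf \<sigma> s = (\<Sum>l<5. \<sigma> l * s l)"

lemma sum5: "(\<Sum>l<(5::nat). f l) = f 0 + f 1 + f 2 + f 3 + (f 4 :: 'a::comm_monoid_add)"
  by (simp add: eval_nat_numeral lessThan_Suc ac_simps)

lemma Lf5: "Lf \<sigma> s = \<sigma> 0 * s 0 + \<sigma> 1 * s 1 + \<sigma> 2 * s 2 + \<sigma> 3 * s 3 + \<sigma> 4 * s 4"
  unfolding Lf_def sum5 ..

lemma Delta'_Lf: "Delta' x = (\<Prod>e\<in>UNIV. Lf (sgv e) (sx x))"
  unfolding Delta'_def
  by (rule prod.cong) (auto simp: Lf5 sgv_def sx_def)


definition e1 :: "nat \<Rightarrow> bool\<times>bool\<times>bool \<Rightarrow> bool\<times>bool\<times>bool\<times>bool" where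
  "e1 n h = (case h of (a,b,c) \<Rightarrow>
     (if n = 0 then (False,a,b,c) else if n = 1 then (False,a,b,c) else if n = 2 then (a,False,b,c)
      else if n = 3 then (a,b,False,c) else (a,b,c,False)))"

definition e2 :: "nat \<Rightarrow> bool\<times>bool\<times>bool \<Rightarrow> bool\<times>bool\<times>bool\<times>bool" where
  "e2 n h = (case h of (a,b,c) \<Rightarrow>
     (if n = 0 then (True,\<not>a,\<not>b,\<not>c) else if n = 1 then (True,a,b,c) else if n = 2 then (a,True,b,c)
      else if n = 3 then (a,b,True,c) else (a,b,c,True)))"

lemma inj_e1: "inj (e1 n)" unfolding inj_def e1_def by auto
lemma inj_e2: "inj (e2 n)" unfolding inj_def e2_def by auto
lemma e12_disj: "e1 n h \<noteq> e2 n h'" unfolding e1_def e2_def by (auto split: prod.splits)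
lemma e12_cover: "range (e1 n) \<union> range (e2 n) = UNIV"
proof -
  have "(a,b,c,d) \<in> range (e1 n) \<union> range (e2 n)" for a b c d
  proof -
    have w0: "(a,b,c,d) = (if n = 0 then (if a then e2 n (\<not>b,\<not>c,\<not>d) else e1 n (b,c,d))
       else if n = 1 then (if a then e2 n (b,c,d) else e1 n (b,c,d))
       else if n = 2 then (if b then e2 n (a,c,d) else e1 n (a,c,d))
       else if n = 3 then (if c then e2 n (a,b,d) else e1 n (a,b,d))
       else (if d then e2 n (a,b,c) else e1 n (a,b,c)))"
      unfolding e1_def e2_def by auto
    show ?thesis by (subst w0) (auto)
  qed
  then show ?thesis by (metis UNIV_eq_I prod_cases4)
qed

lemma prod_pair: "(\<Prod>e\<in>UNIV. f e) = (\<Prod>h\<in>UNIV. f (e1 n h) * (f (e2 n h) :: 'a::comm_monoid_mult))"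
proof -
  have "(\<Prod>e\<in>UNIV. f e) = (\<Prod>e\<in>range (e1 n) \<union> range (e2 n). f e)" by (simp add: e12_cover)
  also have "\<dots> = (\<Prod>e\<in>range (e1 n). f e) * (\<Prod>e\<in>range (e2 n). f e)"
    by (rule prod.union_disjoint) (auto, metis e12_disj)
  also have "\<dots> = (\<Prod>h\<in>UNIV. f (e1 n h)) * (\<Prod>h\<in>UNIV. f (e2 n h))"
    by (simp add: prod.reindex inj_e1 inj_e2)
  finally show ?thesis by (simp add: prod.distrib)
qed

definition cc :: "nat \<Rightarrow> bool\<times>bool\<times>bool \<Rightarrow> complex^5 \<Rightarrow> complex" where
  "cc n h x = Lf (sgv (e1 n h)) (sx x) * Lf (sgv (e2 n h)) (sx x)"

lemma Delta'_cc: "Delta' x = (\<Prod>h\<in>UNIV. cc n h x)"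
  unfolding Delta'_Lf cc_def by (rule prod_pair)


lemma of_nat5_eq: "l < 5 \<Longrightarrow> n < 5 \<Longrightarrow> (of_nat l :: 5) = of_nat n \<longleftrightarrow> l = n"
  by (auto simp: less_Suc_eq eval_nat_numeral)

lemma ex_nat5: obtains n where "n < 5" "(k::5) = of_nat n"
proof (cases k rule: bit1_cases)
  case (of_int z)
  then have "k = of_nat (nat z)" "nat z < 5" by auto
  then show ?thesis using that by blast
qed

lemma xc_add_axis: "l < 5 \<Longrightarrow> n < 5 \<Longrightarrow>
   xc (x + t *s axis (of_nat n) 1) l = xc x l + (if l = n then t else 0)"
  by (simp add: xc_def axis_def of_nat5_eq)


lemma sgn_b_simps[simp]: "sgn_b True = -1" "sgn_b False = 1" "sgn_b (\<not> a) = - sgn_b a"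
  by (auto simp: sgn_b_def)

lemma sgv_e_n: "n \<noteq> 0 \<Longrightarrow> n < 5 \<Longrightarrow> sgv (e1 n h) n = 1 \<and> sgv (e2 n h) n = -1"
  by (cases h) (auto simp: sgv_def e1_def e2_def less_Suc_eq eval_nat_numeral)

lemma sgv_e_l: "n \<noteq> 0 \<Longrightarrow> n < 5 \<Longrightarrow> l < 5 \<Longrightarrow> l \<noteq> n \<Longrightarrow> sgv (e2 n h) l = sgv (e1 n h) l"
  by (cases h) (auto simp: sgv_def e1_def e2_def less_Suc_eq eval_nat_numeral)

lemma sgv_e_0: "sgv (e1 0 h) 0 = 1" "sgv (e2 0 h) 0 = 1" "l \<noteq> 0 \<Longrightarrow> sgv (e2 0 h) l = - sgv (e1 0 h) l"
  by (cases h; auto simp: sgv_def e1_def e2_def)+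

lemma Lf_split: "n < 5 \<Longrightarrow> Lf \<sigma> s = \<sigma> n * s n + (\<Sum>l\<in>{..<5}-{n}. \<sigma> l * s l)"
  unfolding Lf_def by (subst sum.remove[of _ n]) auto

definition Aa :: "nat \<Rightarrow> bool\<times>bool\<times>bool \<Rightarrow> (nat \<Rightarrow> complex) \<Rightarrow> complex" where
  "Aa n h s = (\<Sum>l\<in>{..<5}-{n}. sgv (e1 n h) l * s l)"

definition kap :: "nat \<Rightarrow> complex" where "kap n = (if n = 0 then -1 else 1)"

lemma sx_sq: "(sx x l)^2 = xc x l" by (simp add: sx_def)

lemma cc_Aa: assumes "n < 5" shows "cc n h x = kap n * ((Aa n h (sx x))^2 - xc x n)"
proof (cases "n = 0")
  case True
  have e2: "Lf (sgv (e2 n h)) (sx x) = sx x 0 - Aa n h (sx x)"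
    using True assms unfolding Aa_def
    by (simp add: Lf_split[of 0] sgv_e_0 sum_negf[symmetric])
  have e1: "Lf (sgv (e1 n h)) (sx x) = sx x 0 + Aa n h (sx x)"
    using True assms unfolding Aa_def by (simp add: Lf_split[of 0] sgv_e_0)
  show ?thesis using True unfolding cc_def kap_def e1 e2
    by (simp add: sx_sq[symmetric] algebra_simps power2_eq_square)
next
  case False
  have e2: "Lf (sgv (e2 n h)) (sx x) = - sx x n + Aa n h (sx x)"
    using False assms unfolding Aa_def
    by (simp add: Lf_split[of n] sgv_e_n sgv_e_l)
  have e1: "Lf (sgv (e1 n h)) (sx x) = sx x n + Aa n h (sx x)"
    using False assms unfolding Aa_def by (simp add: Lf_split[of n] sgv_e_n)
  show ?thesis using False unfolding cc_def kap_def e1 e2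
    by (simp add: sx_sq[symmetric] algebra_simps power2_eq_square)
qed

lemma cc_shift: assumes "n < 5"
  shows "cc n h (x + t *s axis (of_nat n) 1) = cc n h x - kap n * t"
proof -
  let ?y = "x + t *s axis (of_nat n) 1"
  have "Aa n h (sx ?y) = Aa n h (sx x)"
    unfolding Aa_def by (rule sum.cong) (auto simp: sx_def xc_add_axis assms)
  moreover have "xc ?y n = xc x n + t" by (simp add: xc_add_axis assms)
  ultimately show ?thesis using assms by (simp add: cc_Aa algebra_simps)
qed

lemma Delta'_deriv: assumes "n < 5"
  shows "((\<lambda>t. Delta' (x + t *s axis (of_nat n) 1)) has_field_derivative
     (- kap n) * (\<Sum>h\<in>UNIV. \<Prod>h'\<in>UNIV-{h}. cc n h' x)) (at 0)"
proof -
  have eq: "Delta' (x + t *s axis (of_nat n) 1) = (\<Prod>h\<in>UNIV. cc n h x - kap n * t)" for t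
    by (simp add: Delta'_cc[of _ n] cc_shift assms)
  have "((\<lambda>t. \<Prod>h\<in>UNIV. cc n h x - kap n * t) has_field_derivative
     (\<Sum>h\<in>UNIV. (- kap n) * (\<Prod>h'\<in>UNIV-{h}. cc n h' x - kap n * 0))) (at 0)"
    by (rule has_field_derivative_prod) (auto intro!: derivative_eq_intros)
  then show ?thesis unfolding eq by (simp add: sum_distrib_left)
qed

lemma two_zero:
  assumes "finite A"
  shows "((\<Prod>a\<in>A. c a) = 0 \<and> (\<Sum>a\<in>A. \<Prod>b\<in>A-{a}. c b) = (0::'a::idom))
     \<longleftrightarrow> (\<exists>a\<in>A. \<exists>b\<in>A. a \<noteq> b \<and> c a = 0 \<and> c b = 0)"
proof
  assume H: "(\<Prod>a\<in>A. c a) = 0 \<and> (\<Sum>a\<in>A. \<Prod>b\<in>A-{a}. c b) = 0"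
  then obtain a where a: "a \<in> A" "c a = 0" using assms by auto
  have "(\<Sum>g\<in>A. \<Prod>b\<in>A-{g}. c b) = (\<Prod>b\<in>A-{a}. c b) + (\<Sum>g\<in>A-{a}. \<Prod>b\<in>A-{g}. c b)"
    using assms a by (simp add: sum.remove)
  also have "(\<Sum>g\<in>A-{a}. \<Prod>b\<in>A-{g}. c b) = 0"
    using assms a by (intro sum.neutral ballI) (auto simp: prod_zero_iff)
  finally have "(\<Prod>b\<in>A-{a}. c b) = 0" using H by simp
  then obtain b where "b \<in> A - {a}" "c b = 0" using assms by (auto simp: prod_zero_iff)
  with a show "\<exists>a\<in>A. \<exists>b\<in>A. a \<noteq> b \<and> c a = 0 \<and> c b = 0" by blast
next
  assume "\<exists>a\<in>A. \<exists>b\<in>A. a \<noteq> b \<and> c a = 0 \<and> c b = 0"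
  then obtain a b where ab: "a \<in> A" "b \<in> A" "a \<noteq> b" "c a = 0" "c b = 0" by blast
  have "(\<Prod>b\<in>A-{g}. c b) = 0" if "g \<in> A" for g
    using assms ab that by (cases "g = a") (auto simp: prod_zero_iff)
  then show "(\<Prod>a\<in>A. c a) = 0 \<and> (\<Sum>a\<in>A. \<Prod>b\<in>A-{a}. c b) = 0"
    using assms ab by (auto simp: prod_zero_iff intro!: sum.neutral)
qed


definition Ssum :: "nat \<Rightarrow> complex^5 \<Rightarrow> complex" where
  "Ssum n x = (\<Sum>h\<in>UNIV. \<Prod>h'\<in>UNIV-{h}. cc n h' x)"

lemma F_O_w: "((\<lambda>t. F_O (fst p + t * 1, snd p + t *s 0)) has_field_derivative 2 * fst p) (at 0)"
proof -
  have "((\<lambda>t. (fst p + t)^2 + 3 * Delta' (snd p)) has_field_derivative 2 * fst p) (at 0)"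
    by (auto intro!: derivative_eq_intros)
  then show ?thesis by (simp add: F_O_def)
qed

lemma F_O_k: assumes "n < 5"
  shows "((\<lambda>t. F_O (fst p + t * 0, snd p + t *s axis (of_nat n) 1)) has_field_derivative 
     3 * ((- kap n) * Ssum n (snd p))) (at 0)"
proof -
  have d: "((\<lambda>t. Delta' (snd p + t *s axis (of_nat n) 1)) has_field_derivative (- kap n) * Ssum n (snd p)) (at 0)"
    using Delta'_deriv[OF assms] by (simp add: Ssum_def)
  have "((\<lambda>t. (fst p)^2 + 3 * Delta' (snd p + t *s axis (of_nat n) 1)) has_field_derivative 
     0 + 3 * ((- kap n) * Ssum n (snd p))) (at 0)"
    by (intro DERIV_add DERIV_const DERIV_cmult d)
  then show ?thesis by (simp add: F_O_def)
qed

lemma kap_nz: "kap n \<noteq> 0" by (simp add: kap_def)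

lemma sing_char1: "p \<in> sing_cone_O \<longleftrightarrow> fst p = 0 \<and> Delta' (snd p) = 0 \<and> (\<forall>n<5. Ssum n (snd p) = 0)"
proof -
  have w: "((\<lambda>t. F_O (fst p + t * 1, snd p + t *s 0)) has_field_derivative 0) (at 0) \<longleftrightarrow> fst p = 0"
    using F_O_w[of p] DERIV_unique by force
  have k: "((\<lambda>t. F_O (fst p + t * 0, snd p + t *s axis (of_nat n) 1)) has_field_derivative 0) (at 0) \<longleftrightarrow> Ssum n (snd p) = 0"
    if "n < 5" for n
    using F_O_k[OF that, of p] DERIV_unique kap_nz[of n] by force
  have "(\<forall>e\<in>coord_dirs. ((\<lambda>t::complex. F_O (fst p + t * fst e, snd p + t *s snd e)) has_field_derivative 0) (at 0))
     \<longleftrightarrow> fst p = 0 \<and> (\<forall>n<5. Ssum n (snd p) = 0)"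
  proof
    assume H: "\<forall>e\<in>coord_dirs. ((\<lambda>t::complex. F_O (fst p + t * fst e, snd p + t *s snd e)) has_field_derivative 0) (at 0)"
    have "fst p = 0" using H w unfolding coord_dirs_def by auto
    moreover have "Ssum n (snd p) = 0" if "n < 5" for n
      using H k[OF that] unfolding coord_dirs_def by force
    ultimately show "fst p = 0 \<and> (\<forall>n<5. Ssum n (snd p) = 0)" by blast
  next
    assume H: "fst p = 0 \<and> (\<forall>n<5. Ssum n (snd p) = 0)"
    show "\<forall>e\<in>coord_dirs. ((\<lambda>t::complex. F_O (fst p + t * fst e, snd p + t *s snd e)) has_field_derivative 0) (at 0)"
    proof
      fix e assume "e \<in> coord_dirs"
      then consider "e = (1,0)" | k where "e = (0, axis k 1)" unfolding coord_dirs_def by blast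
      then show "((\<lambda>t::complex. F_O (fst p + t * fst e, snd p + t *s snd e)) has_field_derivative 0) (at 0)"
      proof cases
        case 1 then show ?thesis using w H by simp
      next
        case (2 k)
        obtain n where "n < 5" "k = of_nat n" using ex_nat5 by blast
        then show ?thesis using k H 2 by simp
      qed
    qed
  qed
  moreover have "F_O p = 0 \<longleftrightarrow> (fst p)^2 + 3 * Delta' (snd p) = 0" by (simp add: F_O_def)
  ultimately show ?thesis unfolding sing_cone_O_def by auto
qed

lemma sing_char: "p \<in> sing_cone_O \<longleftrightarrow> fst p = 0 \<and> (\<forall>n<5. \<exists>h h'. h \<noteq> h' \<and> cc n h (snd p) = 0 \<and> cc n h' (snd p) = 0)"
proof -
  have "Delta' (snd p) = 0 \<and> Ssum n (snd p) = 0 \<longleftrightarrow> (\<exists>h h'. h \<noteq> h' \<and> cc n h (snd p) = 0 \<and> cc n h' (snd p) = 0)" for n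
    using two_zero[of UNIV "\<lambda>h. cc n h (snd p)"] unfolding Delta'_cc[of _ n] Ssum_def by auto
  then show ?thesis unfolding sing_char1 by (metis zero_less_numeral)
qed


definition D3 :: "complex \<Rightarrow> complex \<Rightarrow> complex \<Rightarrow> complex" where
  "D3 a b c = a^2 + b^2 + c^2 - 2*a*b - 2*a*c - 2*b*c"

definition Rexp :: "complex^5 \<Rightarrow> nat \<Rightarrow> nat \<Rightarrow> complex" where
  "Rexp x i j = (let R = {0..<5} - {i, j} in
        (\<Sum>k\<in>R. (xc x k)^2) - (\<Sum>k\<in>R. \<Sum>l\<in>R - {k}. xc x k * xc x l))"

definition Scond :: "complex^5 \<Rightarrow> nat \<Rightarrow> nat \<Rightarrow> bool" where
  "Scond x i j \<longleftrightarrow> xc x i = xc x j \<and> Rexp x i j = 0"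

lemma S_comp_iff: "(w, x) \<in> S_comp i j \<longleftrightarrow> w = 0 \<and> Scond x i j"
  unfolding S_comp_def Scond_def Rexp_def Let_def by simp

lemma Scond_sym: "Scond x i j \<longleftrightarrow> Scond x j i"
  unfolding Scond_def Rexp_def by (auto simp: insert_commute)

lemma sum3: "k \<noteq> l \<Longrightarrow> k \<noteq> m \<Longrightarrow> l \<noteq> m \<Longrightarrow> (\<Sum>a\<in>{k,l,m}. f a) = f k + f l + (f m::complex)"
  by (simp add: add.assoc)

lemma Rexp_3: assumes "{0..<5} - {i, j} = {k, l, m}" "k \<noteq> l" "k \<noteq> m" "l \<noteq> m"
  shows "Rexp x i j = D3 (xc x k) (xc x l) (xc x m)"
proof -
  have d: "{k,l,m} - {k} = {l,m}" "{k,l,m} - {l} = {k,m}" "{k,l,m} - {m} = {k,l}" using assms(2-4) by auto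
  show ?thesis
    unfolding Rexp_def Let_def assms(1) D3_def sum3[OF assms(2-4)] d using assms(2-4)
    by (simp add: power2_eq_square algebra_simps)
qed

lemma D3_factor: "D3 (a^2) (b^2) (c^2) = (a+b+c)*(a+b-c)*(a-b+c)*(a-b-c)"
  unfolding D3_def by algebra

lemma compl3: assumes "(i::nat) < 5" "j < 5" "i \<noteq> j"
  obtains k l m where "{0..<5} - {i, j} = {k, l, m}" "k \<noteq> l" "k \<noteq> m" "l \<noteq> m"
proof -
  have "card ({0..<5::nat} - {i, j}) = 3" using assms by (subst card_Diff_subset) auto
  then show ?thesis using that by (auto simp: card_3_iff)
qed

definition SG :: "(nat \<Rightarrow> complex) \<Rightarrow> bool" where
  "SG \<sigma> \<longleftrightarrow> (\<forall>l<5. \<sigma> l = 1 \<or> \<sigma> l = -1)"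

lemma sign_sq: "\<sigma> = 1 \<or> \<sigma> = -1 \<Longrightarrow> (\<sigma> * (a::complex))^2 = a^2"
  by (auto simp: power2_eq_square)

lemma split_sum:
  assumes "finite I" "\<forall>l\<in>I. \<sigma> l = 1 \<or> \<sigma> l = -1" "\<forall>l\<in>I. \<tau> l = 1 \<or> \<tau> l = -1"
    "(\<Sum>l\<in>I. \<sigma> l * s l) = 0" "(\<Sum>l\<in>I. \<tau> l * s l) = (0::complex)"
  shows "(\<Sum>l\<in>{l\<in>I. \<sigma> l \<noteq> \<tau> l}. \<sigma> l * s l) = 0 \<and> (\<Sum>l\<in>I - {l\<in>I. \<sigma> l \<noteq> \<tau> l}. \<sigma> l * s l) = 0"
proof -
  let ?D = "{l\<in>I. \<sigma> l \<noteq> \<tau> l}"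
  have "(\<Sum>l\<in>I. (\<sigma> l - \<tau> l) * s l) = 0" using assms(4,5) by (simp add: algebra_simps sum_subtractf)
  also have "(\<Sum>l\<in>I. (\<sigma> l - \<tau> l) * s l) = (\<Sum>l\<in>?D. 2 * (\<sigma> l * s l))"
  proof -
    have "(\<Sum>l\<in>I. (\<sigma> l - \<tau> l) * s l) = (\<Sum>l\<in>?D. (\<sigma> l - \<tau> l) * s l)"
      using assms(1) by (intro sum.mono_neutral_right) auto
    also have "\<dots> = (\<Sum>l\<in>?D. 2 * (\<sigma> l * s l))"
    proof (intro sum.cong refl)
      fix l assume "l \<in> ?D"
      then have "\<sigma> l - \<tau> l = 2 * \<sigma> l" using assms(2,3) by force
      then show "(\<sigma> l - \<tau> l) * s l = 2 * (\<sigma> l * s l)" by simp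
    qed
    finally show ?thesis .
  qed
  finally have 1: "(\<Sum>l\<in>?D. \<sigma> l * s l) = 0" by (simp add: sum_distrib_left[symmetric])
  have "(\<Sum>l\<in>I. \<sigma> l * s l) = (\<Sum>l\<in>?D. \<sigma> l * s l) + (\<Sum>l\<in>I - ?D. \<sigma> l * s l)"
    using assms(1) by (metis (no_types, lifting) add.commute mem_Collect_eq subsetI sum.subset_diff)
  then show ?thesis using 1 assms(4) by simp
qed

lemma pair_eq: "(\<sigma> = 1 \<or> \<sigma> = -1) \<Longrightarrow> (\<tau> = 1 \<or> \<tau> = -1) \<Longrightarrow> \<sigma> * a + \<tau> * b = (0::complex) \<Longrightarrow> a^2 = b^2"
proof -
  assume a: "\<sigma> = 1 \<or> \<sigma> = -1" "\<tau> = 1 \<or> \<tau> = -1" "\<sigma> * a + \<tau> * b = 0"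
  then have "\<sigma> * a = - (\<tau> * b)" by (simp add: eq_neg_iff_add_eq_0)
  then have "(\<sigma> * a)^2 = (\<tau> * b)^2" by simp
  then show ?thesis using a(1,2) by (simp add: sign_sq)
qed

lemma three_D3:
  assumes "SG \<sigma>" "k < 5" "l < 5" "m < 5" "\<sigma> k * s k + \<sigma> l * s l + \<sigma> m * s m = 0"
  shows "D3 ((s k)^2) ((s l)^2) ((s m)^2) = 0"
proof -
  have "D3 ((s k)^2) ((s l)^2) ((s m)^2) = D3 ((\<sigma> k * s k)^2) ((\<sigma> l * s l)^2) ((\<sigma> m * s m)^2)"
    using assms(1-4) unfolding SG_def by (simp add: sign_sq)
  also have "\<dots> = 0" unfolding D3_factor using assms(5) by simp
  finally show ?thesis .
qed


lemma SG_nz: "SG \<sigma> \<Longrightarrow> l < 5 \<Longrightarrow> \<sigma> l \<noteq> 0" unfolding SG_def by force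
lemma SG_l: "SG \<sigma> \<Longrightarrow> l < 5 \<Longrightarrow> \<sigma> l = 1 \<or> \<sigma> l = -1" unfolding SG_def by force

lemma finG:
  assumes "SG \<sigma>" "X \<subseteq> {..<5}" "(\<Sum>l\<in>X. \<sigma> l * sx x l) = 0" "(\<Sum>l\<in>{..<5}-X. \<sigma> l * sx x l) = 0"
    "card X = 1 \<or> card X = 2"
  shows "(\<exists>i<5. sx x i = 0) \<or> (\<exists>i j. i < 5 \<and> j < 5 \<and> i \<noteq> j \<and> Scond x i j)"
  using assms(5)
proof
  assume "card X = 1"
  then obtain i where X: "X = {i}" by (auto simp: card_1_singleton_iff)
  then have "i < 5" using assms(2) by auto
  moreover have "\<sigma> i * sx x i = 0" using assms(3) X by simp
  ultimately show ?thesis using SG_nz[OF assms(1)] by auto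
next
  assume "card X = 2"
  then obtain i j where X: "X = {i, j}" "i \<noteq> j" by (auto simp: card_2_iff)
  then have ij: "i < 5" "j < 5" using assms(2) by auto
  have "\<sigma> i * sx x i + \<sigma> j * sx x j = 0" using assms(3) X by simp
  then have "(sx x i)^2 = (sx x j)^2" using pair_eq SG_l[OF assms(1)] ij by blast
  then have eq: "xc x i = xc x j" by (simp add: sx_sq)
  obtain k l m where klm: "{0..<5} - {i, j} = {k, l, m}" "k \<noteq> l" "k \<noteq> m" "l \<noteq> m"
    using compl3[OF ij X(2)] by blast
  have kl: "k < 5" "l < 5" "m < 5" using klm(1) by (auto simp: set_eq_iff)
  have "{..<5} - X = {k, l, m}" using klm(1) X by (auto simp: atLeast0LessThan)
  then have "\<sigma> k * sx x k + \<sigma> l * sx x l + \<sigma> m * sx x m = 0" using assms(4) sum3[OF klm(2-4)] by simp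
  then have "D3 ((sx x k)^2) ((sx x l)^2) ((sx x m)^2) = 0" using three_D3[OF assms(1) kl] by blast
  then have "Rexp x i j = 0" using Rexp_3[OF klm] by (simp add: sx_sq)
  then show ?thesis using eq ij X(2) unfolding Scond_def by blast
qed

lemma finA:
  assumes "SG \<sigma>" "D \<subseteq> {..<5}" "D \<noteq> {}" "{..<5} - D \<noteq> {}"
    "(\<Sum>l\<in>D. \<sigma> l * sx x l) = 0" "(\<Sum>l\<in>{..<5}-D. \<sigma> l * sx x l) = 0"
  shows "(\<exists>i<5. sx x i = 0) \<or> (\<exists>i j. i < 5 \<and> j < 5 \<and> i \<noteq> j \<and> Scond x i j)"
proof -
  have f: "finite D" using assms(2) finite_subset by blast
  have "card D \<le> 5" using assms(2) card_mono[of "{..<5::nat}" D] by simp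
  then have c: "card D + card ({..<5} - D) = 5" using assms(2) f
    by (simp add: card_Diff_subset)
  have "card D \<noteq> 0" "card ({..<5} - D) \<noteq> 0" using assms(3,4) f by auto
  then consider "card D = 1 \<or> card D = 2" | "card ({..<5} - D) = 1 \<or> card ({..<5} - D) = 2" using c by linarith
  then show ?thesis
  proof cases
    case 1 then show ?thesis using finG[OF assms(1,2,5,6)] by blast
  next
    case 2
    have e: "{..<5} - ({..<5} - D) = D" using assms(2) by auto
    show ?thesis using finG[of \<sigma> "{..<5} - D" x] 2 assms(1,5,6) unfolding e by blast
  qed
qed

lemma finGB:
  assumes "SG \<sigma>" "i < 5" "sx x i = 0" "X \<union> Y = {..<5} - {i}" "X \<inter> Y = {}"
    "(\<Sum>l\<in>X. \<sigma> l * sx x l) = 0" "(\<Sum>l\<in>Y. \<sigma> l * sx x l) = 0"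
    "card X = 1 \<or> card X = 2"
  shows "\<exists>i j. i < 5 \<and> j < 5 \<and> i \<noteq> j \<and> Scond x i j"
  using assms(8)
proof
  assume "card X = 1"
  then obtain j where X: "X = {j}" by (auto simp: card_1_singleton_iff)
  then have j: "j < 5" "j \<noteq> i" using assms(4) by auto
  have "\<sigma> j * sx x j = 0" using assms(6) X by simp
  then have "sx x j = 0" using SG_nz[OF assms(1) j(1)] by simp
  then have eq: "xc x i = xc x j" using assms(3) by (metis sx_sq)
  obtain k l m where klm: "{0..<5} - {i, j} = {k, l, m}" "k \<noteq> l" "k \<noteq> m" "l \<noteq> m"
    using compl3[OF assms(2) j(1)] j(2) by metis
  have kl: "k < 5" "l < 5" "m < 5" using klm(1) by (auto simp: set_eq_iff)
  have "Y = ({..<5} - {i}) - X" using assms(4,5) by blast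
  also have "\<dots> = {0..<5} - {i, j}" unfolding X atLeast0LessThan by blast
  finally have "Y = {k, l, m}" using klm(1) by simp
  then have "\<sigma> k * sx x k + \<sigma> l * sx x l + \<sigma> m * sx x m = 0" using assms(7) sum3[OF klm(2-4)] by simp
  then have "D3 ((sx x k)^2) ((sx x l)^2) ((sx x m)^2) = 0" using three_D3[OF assms(1) kl] by blast
  then have "Rexp x i j = 0" using Rexp_3[OF klm] by (simp add: sx_sq)
  then show ?thesis using eq assms(2) j unfolding Scond_def by blast
next
  assume cX: "card X = 2"
  then obtain j k where X: "X = {j, k}" "j \<noteq> k" by (auto simp: card_2_iff)
  then have jk: "j < 5" "k < 5" "j \<noteq> i" "k \<noteq> i" using assms(4) by auto
  have "\<sigma> j * sx x j + \<sigma> k * sx x k = 0" using assms(6) X by simp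
  then have "(sx x j)^2 = (sx x k)^2" using pair_eq SG_l[OF assms(1)] jk by blast
  then have eq: "xc x j = xc x k" by (simp add: sx_sq)
  have fY: "finite Y" using assms(4) by (metis finite_Diff finite_Un finite_lessThan)
  have "card (X \<union> Y) = 4" using assms(2,4) by (simp add: card_Diff_subset)
  then have "card Y = 2" using cX card_Un_disjoint[OF _ fY assms(5)] X by simp
  then obtain l m where Y: "Y = {l, m}" "l \<noteq> m" by (auto simp: card_2_iff)
  have "\<sigma> l * sx x l + \<sigma> m * sx x m = 0" using assms(7) Y by simp
  then have "(sx x l)^2 = (sx x m)^2" using pair_eq SG_l[OF assms(1)] Y assms(4) by blast
  then have eq2: "xc x l = xc x m" by (simp add: sx_sq)
  have U: "{0..<5} = insert i (X \<union> Y)" using assms(2,4) unfolding atLeast0LessThan by blast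
  have "i \<notin> Y" using assms(4) by blast
  then have "i \<noteq> l" "i \<noteq> m" using Y by auto
  moreover have "{0..<5} - {j, k} = {i, l, m}"
  proof -
    have iX: "i \<notin> X" using assms(4) by blast
    have "insert i (X \<union> Y) - X = insert i Y" using iX assms(5) by blast
    then show ?thesis using U X(1) Y(1) by simp
  qed
  ultimately have klm: "{0..<5} - {j, k} = {i, l, m}" "i \<noteq> l" "i \<noteq> m" "l \<noteq> m" using Y by auto
  have "Rexp x j k = D3 (xc x i) (xc x l) (xc x m)" using Rexp_3[OF klm] .
  also have "\<dots> = 0" using eq2 assms(3) by (simp add: D3_def sx_sq[symmetric] power2_eq_square)
  finally show ?thesis using eq jk X(2) unfolding Scond_def by blast
qed


lemma finB:
  assumes "i < 5" "sx x i = 0" "SG \<sigma>" "D \<subseteq> {..<5} - {i}" "D \<noteq> {}" "f < 5" "f \<noteq> i" "f \<notin> D"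
    "(\<Sum>l\<in>D. \<sigma> l * sx x l) = 0" "(\<Sum>l\<in>{..<5}-D. \<sigma> l * sx x l) = 0"
  shows "\<exists>i j. i < 5 \<and> j < 5 \<and> i \<noteq> j \<and> Scond x i j"
proof -
  define E where "E = ({..<5} - {i}) - D"
  have iE: "i \<notin> E" unfolding E_def by blast
  have "{..<5} - D = insert i E" using assms(1,4) unfolding E_def by blast
  then have sE: "(\<Sum>l\<in>E. \<sigma> l * sx x l) = 0" using assms(10) iE assms(2) by (simp add: E_def)
  have U: "D \<union> E = {..<5} - {i}" "D \<inter> E = {}" using assms(4) unfolding E_def by blast+
  have fD: "finite D" "finite E" using assms(4) unfolding E_def by (auto intro: finite_subset)
  have "f \<in> E" using assms(6,7,8) unfolding E_def by blast
  then have "card E \<noteq> 0" "card D \<noteq> 0" using fD assms(5) by auto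
  moreover have "card D + card E = 4" using card_Un_disjoint[OF fD U(2)] U(1) assms(1) by (simp add: card_Diff_subset)
  ultimately consider "card D = 1 \<or> card D = 2" | "card E = 1 \<or> card E = 2" by linarith
  then show ?thesis
  proof cases
    case 1 then show ?thesis using finGB[OF assms(3,1,2) U assms(9) sE] by blast
  next
    case 2 then show ?thesis using finGB[OF assms(3,1,2), of E D] U assms(9) sE by (simp add: Un_commute Int_commute)
  qed
qed

lemma SG_sgv: "SG (sgv e)" unfolding SG_def sgv_def sgn_b_def by (auto split: prod.splits)
lemma sgv_0: "sgv e 0 = 1" unfolding sgv_def by (auto split: prod.splits)
lemma sgv_e1_0_1: "sgv (e1 0 h) 1 = 1" "sgv (e1 0 h) (Suc 0) = 1" unfolding sgv_def e1_def by (auto split: prod.splits)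
lemma sgv_inj: "(\<forall>l<5. sgv e l = sgv e' l) \<Longrightarrow> e = e'"
proof -
  assume H: "\<forall>l<5. sgv e l = sgv e' l"
  obtain a b c d where e: "e = (a,b,c,d)" by (cases e)
  obtain a' b' c' d' where e': "e' = (a',b',c',d')" by (cases e')
  have "sgn_b a = sgn_b a'" "sgn_b b = sgn_b b'" "sgn_b c = sgn_b c'" "sgn_b d = sgn_b d'"
    using H[rule_format, of 1] H[rule_format, of 2] H[rule_format, of 3] H[rule_format, of 4]
    by (auto simp: sgv_def e e')
  then show ?thesis unfolding e e' sgn_b_def by (auto split: if_splits)
qed

lemma cc_zero: "cc n h x = 0 \<Longrightarrow> \<exists>e\<in>{e1 n h, e2 n h}. Lf (sgv e) (sx x) = 0"
  unfolding cc_def by auto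

lemma stageA:
  assumes "h \<noteq> h'" "cc 0 h x = 0" "cc 0 h' x = 0"
  shows "(\<exists>i<5. sx x i = 0) \<or> (\<exists>i j. i < 5 \<and> j < 5 \<and> i \<noteq> j \<and> Scond x i j)"
proof -
  obtain e where e: "e \<in> {e1 0 h, e2 0 h}" "Lf (sgv e) (sx x) = 0" using cc_zero[OF assms(2)] by blast
  obtain e' where e': "e' \<in> {e1 0 h', e2 0 h'}" "Lf (sgv e') (sx x) = 0" using cc_zero[OF assms(3)] by blast
  have ne: "e \<noteq> e'"
  proof
    assume "e = e'"
    moreover have "e1 0 h \<noteq> e1 0 h'" using injD[OF inj_e1[of 0], of h h'] assms(1) by blast
    moreover have "e2 0 h \<noteq> e2 0 h'" using injD[OF inj_e2[of 0], of h h'] assms(1) by blast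
    moreover have "e1 0 h \<noteq> e2 0 h'" "e2 0 h \<noteq> e1 0 h'" using e12_disj[of 0 h h'] e12_disj[of 0 h' h] by metis+
    ultimately show False using e(1) e'(1) by blast
  qed
  let ?D = "{l\<in>{..<5}. sgv e l \<noteq> sgv e' l}"
  have D1: "?D \<noteq> {}" using sgv_inj ne by blast
  have "0 \<notin> ?D" by (simp add: sgv_0)
  then have "0 \<in> {..<5} - ?D" by simp
  then have D2: "{..<5} - ?D \<noteq> {}" by (metis empty_iff)
  have sg: "\<forall>l\<in>{..<5::nat}. sgv e l = 1 \<or> sgv e l = -1" "\<forall>l\<in>{..<5::nat}. sgv e' l = 1 \<or> sgv e' l = -1"
    using SG_sgv[of e] SG_sgv[of e'] unfolding SG_def by auto
  have z: "(\<Sum>l\<in>{..<5}. sgv e l * sx x l) = 0" "(\<Sum>l\<in>{..<5}. sgv e' l * sx x l) = 0"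
    using e(2) e'(2) unfolding Lf_def by auto
  note sp = split_sum[OF finite_lessThan sg z]
  have D3: "?D \<subseteq> {..<5}" by blast
  show ?thesis
    using finA[OF SG_sgv[of e] D3 D1 D2 conjunct1[OF sp] conjunct2[OF sp]] .
qed

lemma stageB:
  assumes "i < 5" "sx x i = 0" "h \<noteq> h'" "cc i h x = 0" "cc i h' x = 0"
  shows "\<exists>i j. i < 5 \<and> j < 5 \<and> i \<noteq> j \<and> Scond x i j"
proof -
  have L0: "Lf (sgv (e1 i h)) (sx x) = 0" if "cc i h x = 0" for h
  proof -
    have "kap i * ((Aa i h (sx x))^2 - xc x i) = 0" using that cc_Aa[OF assms(1)] by simp
    then have "Aa i h (sx x) = 0" using kap_nz assms(2) by (simp add: sx_sq[symmetric])
    then show ?thesis using Lf_split[OF assms(1)] assms(2) unfolding Aa_def by simp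
  qed
  let ?s = "sgv (e1 i h)" and ?t = "sgv (e1 i h')"
  let ?D = "{l\<in>{..<5}. ?s l \<noteq> ?t l}"
  have "e1 i h \<noteq> e1 i h'" using injD[OF inj_e1[of i], of h h'] assms(3) by blast
  then have "?D \<noteq> {}" using sgv_inj by blast
  moreover have "?s i = ?t i" using sgv_e_n[OF _ assms(1)] by (cases "i = 0") (auto simp: sgv_0)
  then have "?D \<subseteq> {..<5} - {i}" by auto
  moreover have "(if i = 0 then 1 else 0) \<notin> ?D" by (auto simp: sgv_0 sgv_e1_0_1)
  moreover have "\<forall>l\<in>{..<5::nat}. ?s l = 1 \<or> ?s l = -1" "\<forall>l\<in>{..<5::nat}. ?t l = 1 \<or> ?t l = -1"
    using SG_sgv[of "e1 i h"] SG_sgv[of "e1 i h'"] unfolding SG_def by auto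
  moreover have "(\<Sum>l<5. ?s l * sx x l) = 0" "(\<Sum>l<5. ?t l * sx x l) = 0"
    using L0[OF assms(4)] L0[OF assms(5)] unfolding Lf_def by auto
  ultimately have sp: "(\<Sum>l\<in>?D. ?s l * sx x l) = 0 \<and> (\<Sum>l\<in>{..<5} - ?D. ?s l * sx x l) = 0"
    using split_sum[of "{..<5}" ?s ?t "sx x"] by blast
  have "(if i = 0 then 1 else 0) < (5::nat)" "(if i = 0 then 1 else (0::nat)) \<noteq> i" by auto
  then show ?thesis
    using finB[OF assms(1,2) SG_sgv[of "e1 i h"], of ?D "if i = 0 then 1 else 0"] sp
      \<open>?D \<noteq> {}\<close> \<open>?D \<subseteq> {..<5} - {i}\<close> \<open>(if i = 0 then 1 else 0) \<notin> ?D\<close> by blast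
qed

lemma sing_sub: assumes "p \<in> sing_cone_O" shows "p \<in> \<Union>{S_comp i j | i j. i < j \<and> j < 5}"
proof -
  obtain w x where p: "p = (w, x)" by (cases p)
  have w: "w = 0" and C: "\<forall>n<5. \<exists>h h'. h \<noteq> h' \<and> cc n h x = 0 \<and> cc n h' x = 0"
    using assms unfolding sing_char p by auto
  have "\<exists>i j. i < 5 \<and> j < 5 \<and> i \<noteq> j \<and> Scond x i j"
  proof -
    have "(0::nat) < 5" by simp
    then obtain h h' where "h \<noteq> h'" "cc 0 h x = 0" "cc 0 h' x = 0" using C by blast
    from stageA[OF this] show ?thesis
    proof
      assume "\<exists>i<5. sx x i = 0"
      then obtain i where i: "i < 5" "sx x i = 0" by blast
      obtain h h' where "h \<noteq> h'" "cc i h x = 0" "cc i h' x = 0" using C i by blast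
      then show ?thesis using stageB[OF i] by blast
    qed
  qed
  then obtain i j where ij: "i < 5" "j < 5" "i \<noteq> j" "Scond x i j" by blast
  show ?thesis
  proof (cases "i < j")
    case True
    have "p \<in> S_comp i j" using ij w p S_comp_iff by simp
    then show ?thesis using True ij by blast
  next
    case False
    then have "j < i" using ij by simp
    have "p \<in> S_comp j i" using ij w p S_comp_iff Scond_sym by simp
    then show ?thesis using \<open>j < i\<close> ij by blast
  qed
qed


lemma lt5: "(l::nat) < 5 \<longleftrightarrow> l = 0 \<or> l = 1 \<or> l = 2 \<or> l = 3 \<or> l = 4" by auto

lemma surj_sgv: assumes "SG \<sigma>" "\<sigma> 0 = 1" shows "\<exists>e. \<forall>l<5. sgv e l = \<sigma> l"
proof -
  have s: "sgn_b (\<sigma> l = -1) = \<sigma> l" if "l < 5" for l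
    using SG_l[OF assms(1) that] by (auto simp: sgn_b_def)
  show ?thesis
    by (rule exI[of _ "(\<sigma> 1 = -1, \<sigma> 2 = -1, \<sigma> 3 = -1, \<sigma> 4 = -1)"])
       (auto simp: lt5 sgv_def s assms(2))
qed

lemma C0:
  assumes "SG \<sigma>" "SG \<tau>" "\<sigma> 0 = 1" "\<tau> 0 = 1" "Lf \<sigma> (sx x) = 0" "Lf \<tau> (sx x) = 0"
    "d1 \<noteq> d2" "d1 < 5" "d2 < 5" "\<sigma> d1 \<noteq> \<tau> d1" "\<sigma> d2 \<noteq> \<tau> d2"
    "a1 \<noteq> a2" "a1 < 5" "a2 < 5" "\<sigma> a1 = \<tau> a1" "\<sigma> a2 = \<tau> a2" "n < 5"
  shows "\<exists>h h'. h \<noteq> h' \<and> cc n h x = 0 \<and> cc n h' x = 0"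
proof -
  have get: "\<exists>h. (e = e1 n h \<or> e = e2 n h) \<and> cc n h x = 0" if "\<forall>l<5. sgv e l = \<rho> l" "Lf \<rho> (sx x) = 0" for e \<rho>
  proof -
    have "Lf (sgv e) (sx x) = 0" using that unfolding Lf_def by simp
    moreover have "e \<in> range (e1 n) \<union> range (e2 n)" using e12_cover by blast
    ultimately show ?thesis unfolding cc_def by auto
  qed
  obtain e where e: "\<forall>l<5. sgv e l = \<sigma> l" using surj_sgv[OF assms(1,3)] by blast
  obtain e' where e': "\<forall>l<5. sgv e' l = \<tau> l" using surj_sgv[OF assms(2,4)] by blast
  obtain h where h: "e = e1 n h \<or> e = e2 n h" "cc n h x = 0" using get[OF e assms(5)] by blast
  obtain h' where h': "e' = e1 n h' \<or> e' = e2 n h'" "cc n h' x = 0" using get[OF e' assms(6)] by blast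
  have "h \<noteq> h'"
  proof
    assume hh: "h = h'"
    have "e \<noteq> e'" using e e' assms(8,10) by auto
    then have ee: "(e = e1 n h \<and> e' = e2 n h) \<or> (e = e2 n h \<and> e' = e1 n h)" using h(1) h'(1) hh by auto
    show False
    proof (cases "n = 0")
      case False
      have "sgv e l = sgv e' l" if "l < 5" "l \<noteq> n" for l
      proof -
        have S: "sgv (e2 n h) l = sgv (e1 n h) l" using sgv_e_l[OF False assms(17) that, where h=h] .
        show ?thesis using ee S by (elim disjE conjE) simp_all
      qed
      then show False using assms(7-11) e e' by (metis)
    next
      case True
      have "sgv e' l = - sgv e l" if "l \<noteq> 0" for l
      proof -
        have S: "sgv (e2 0 h) l = - sgv (e1 0 h) l" using sgv_e_0(3)[OF that, where h=h] .
        show ?thesis using ee S True by (elim disjE conjE) simp_all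
      qed
      moreover obtain a where "a \<noteq> 0" "a < 5" "\<sigma> a = \<tau> a" using assms(12-16) by metis
      ultimately show False using e e' SG_nz[OF assms(1)] by force
    qed
  qed
  then show ?thesis using h(2) h'(2) by blast
qed


lemma sum5set: "distinct [a,b,c,d,e] \<Longrightarrow> (\<Sum>t\<in>{a,b,c,d,e}. f t) = f a + f b + f c + f d + (f e :: complex)"
  by (simp add: add.assoc)

lemma sq_eq_sign: "(u::complex)^2 = v^2 \<Longrightarrow> \<exists>\<alpha>. (\<alpha> = 1 \<or> \<alpha> = -1) \<and> u = \<alpha> * v"
  by (metis mult_1 mult_minus1 power2_eq_iff)

lemma D3_sign: assumes "D3 (a^2) (b^2) (c^2) = 0"
  shows "\<exists>\<beta> \<gamma>. (\<beta> = 1 \<or> \<beta> = -1) \<and> (\<gamma> = 1 \<or> \<gamma> = -1) \<and> a + \<beta> * b + \<gamma> * c = 0"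
proof -
  have "(a+b+c)*(a+b-c)*(a-b+c)*(a-b-c) = 0" using assms D3_factor by simp
  then consider "a+b+c = 0" | "a+b-c = 0" | "a-b+c = 0" | "a-b-c = 0" by auto
  then show ?thesis
  proof cases
    case 1 then show ?thesis by (intro exI[of _ 1]) auto
  next
    case 2 then show ?thesis by (intro exI[of _ 1] exI[of _ "-1"]) auto
  next
    case 3 then show ?thesis by (intro exI[of _ "-1"] exI[of _ 1]) auto
  next
    case 4 then show ?thesis by (intro exI[of _ "-1"] exI[of _ "-1"]) auto
  qed
qed

lemma upd_pm: "\<forall>t. \<rho> t = 1 \<or> \<rho> t = -1 \<Longrightarrow> v = 1 \<or> v = (-1::complex) \<Longrightarrow>
   \<forall>t. (\<rho>(a := v)) t = 1 \<or> (\<rho>(a := v)) t = -1"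
  by auto

lemma const_pm: "\<forall>t. (\<lambda>_. 1::complex) t = 1 \<or> (\<lambda>_. 1::complex) t = -1" by auto

lemma sup_lemma:
  assumes "i < j" "j < 5" "Scond x i j" "n < 5"
  shows "\<exists>h h'. h \<noteq> h' \<and> cc n h x = 0 \<and> cc n h' x = 0"
proof -
  let ?s = "sx x"
  obtain k l m where klm: "{0..<5} - {i, j} = {k, l, m}" "k \<noteq> l" "k \<noteq> m" "l \<noteq> m"
    using compl3[of i j] assms(1,2) by (metis less_trans less_irrefl)
  have nk: "k \<noteq> i" "k \<noteq> j" "l \<noteq> i" "l \<noteq> j" "m \<noteq> i" "m \<noteq> j" "i \<noteq> j"
    using klm(1) assms(1) by (auto simp: set_eq_iff)
  have ij5: "i \<in> {0..<5::nat}" "j \<in> {0..<5::nat}" using assms(1,2) by auto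
  have "{0..<5::nat} = insert i (insert j ({0..<5} - {i,j}))" using ij5 by blast
  then have U0: "{0..<5::nat} = {i, j, k, l, m}" unfolding klm(1) by simp
  have U: "{..<5::nat} = {i, j, k, l, m}" using U0 by (simp add: atLeast0LessThan)
  have dist: "distinct [i, j, k, l, m]" using nk klm(2-4) by auto
  have "(?s i)^2 = (?s j)^2" using assms(3) unfolding Scond_def by (simp add: sx_sq)
  then obtain \<alpha> where \<alpha>: "\<alpha> = 1 \<or> \<alpha> = -1" "?s i = \<alpha> * ?s j" using sq_eq_sign by blast
  have "D3 ((?s k)^2) ((?s l)^2) ((?s m)^2) = 0"
    using assms(3) Rexp_3[OF klm] unfolding Scond_def by (simp add: sx_sq)
  then obtain \<beta> \<gamma> where \<beta>\<gamma>: "\<beta> = 1 \<or> \<beta> = -1" "\<gamma> = 1 \<or> \<gamma> = -1" "?s k + \<beta> * ?s l + \<gamma> * ?s m = 0"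
    using D3_sign by blast
  have Lfs: "Lf \<rho> ?s = \<rho> i * ?s i + \<rho> j * ?s j + \<rho> k * ?s k + \<rho> l * ?s l + \<rho> m * ?s m" for \<rho>
    unfolding Lf_def U using sum5set[OF dist] by simp
  have SGI: "SG \<rho>" if "\<forall>t. \<rho> t = 1 \<or> \<rho> t = -1" for \<rho> using that unfolding SG_def by blast
  show ?thesis
  proof (cases "i = 0")
    case True
    define \<sigma> where "\<sigma> = (\<lambda>_. 1::complex)(j := -\<alpha>, k := 1, l := \<beta>, m := \<gamma>)"
    define \<tau> where "\<tau> = (\<lambda>_. 1::complex)(j := -\<alpha>, k := -1, l := -\<beta>, m := -\<gamma>)"
    have v: "\<sigma> i = 1" "\<sigma> j = -\<alpha>" "\<sigma> k = 1" "\<sigma> l = \<beta>" "\<sigma> m = \<gamma>"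
      "\<tau> i = 1" "\<tau> j = -\<alpha>" "\<tau> k = -1" "\<tau> l = -\<beta>" "\<tau> m = -\<gamma>"
      unfolding \<sigma>_def \<tau>_def using nk klm(2-4) by auto
    have "SG \<sigma>" "SG \<tau>" unfolding \<sigma>_def \<tau>_def
      by (intro SGI upd_pm const_pm; use \<alpha>(1) \<beta>\<gamma>(1,2) in auto)+
    moreover have "\<sigma> 0 = 1" "\<tau> 0 = 1" using v True by auto
    moreover have "Lf \<sigma> ?s = 0" "Lf \<tau> ?s = 0"
    proof -
      have "Lf \<sigma> ?s = (?s i - \<alpha> * ?s j) + (?s k + \<beta> * ?s l + \<gamma> * ?s m)"
        unfolding Lfs v by (simp add: algebra_simps)
      then show "Lf \<sigma> ?s = 0" using \<alpha>(2) \<beta>\<gamma>(3) by simp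
      have "Lf \<tau> ?s = (?s i - \<alpha> * ?s j) - (?s k + \<beta> * ?s l + \<gamma> * ?s m)"
        unfolding Lfs v by (simp add: algebra_simps)
      then show "Lf \<tau> ?s = 0" using \<alpha>(2) \<beta>\<gamma>(3) by simp
    qed
    moreover have "\<sigma> k \<noteq> \<tau> k" "\<sigma> l \<noteq> \<tau> l" using v \<beta>\<gamma>(1) by auto
    moreover have "\<sigma> i = \<tau> i" "\<sigma> j = \<tau> j" using v by auto
    moreover have "k < 5" "l < 5" "i < 5" "j < 5" using U by auto
    ultimately show ?thesis using C0[of \<sigma> \<tau> x k l i j n] klm(2) nk assms(4) by blast
  next
    case False
    have "0 \<in> {k, l, m}" using klm(1)[symmetric] False assms(1) by auto
    define c0 where "c0 = (if 0 = k then 1 else if 0 = l then \<beta> else \<gamma>)"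
    have c0: "c0 = 1 \<or> c0 = -1" using \<beta>\<gamma>(1,2) unfolding c0_def by auto
    define \<sigma> where "\<sigma> = (\<lambda>_. 1::complex)(i := 1, j := -\<alpha>, k := c0, l := c0 * \<beta>, m := c0 * \<gamma>)"
    define \<tau> where "\<tau> = (\<lambda>_. 1::complex)(i := -1, j := \<alpha>, k := c0, l := c0 * \<beta>, m := c0 * \<gamma>)"
    have v: "\<sigma> i = 1" "\<sigma> j = -\<alpha>" "\<sigma> k = c0" "\<sigma> l = c0 * \<beta>" "\<sigma> m = c0 * \<gamma>"
      "\<tau> i = -1" "\<tau> j = \<alpha>" "\<tau> k = c0" "\<tau> l = c0 * \<beta>" "\<tau> m = c0 * \<gamma>"
      unfolding \<sigma>_def \<tau>_def using nk klm(2-4) by auto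
    have "SG \<sigma>" "SG \<tau>" unfolding \<sigma>_def \<tau>_def
      by (intro SGI upd_pm const_pm; use \<alpha>(1) \<beta>\<gamma>(1,2) c0 in auto)+
    moreover have "\<sigma> 0 = 1" "\<tau> 0 = 1"
      using v \<open>0 \<in> {k, l, m}\<close> \<beta>\<gamma>(1,2) klm(2-4) unfolding c0_def by auto
    moreover have "Lf \<sigma> ?s = 0" "Lf \<tau> ?s = 0"
    proof -
      have "Lf \<sigma> ?s = (?s i - \<alpha> * ?s j) + c0 * (?s k + \<beta> * ?s l + \<gamma> * ?s m)"
        unfolding Lfs v by (simp add: algebra_simps)
      then show "Lf \<sigma> ?s = 0" using \<alpha>(2) \<beta>\<gamma>(3) by simp
      have "Lf \<tau> ?s = - (?s i - \<alpha> * ?s j) + c0 * (?s k + \<beta> * ?s l + \<gamma> * ?s m)"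
        unfolding Lfs v by (simp add: algebra_simps)
      then show "Lf \<tau> ?s = 0" using \<alpha>(2) \<beta>\<gamma>(3) by simp
    qed
    moreover have "\<sigma> i \<noteq> \<tau> i" "\<sigma> j \<noteq> \<tau> j" using v \<alpha>(1) by auto
    moreover have "\<sigma> k = \<tau> k" "\<sigma> l = \<tau> l" using v by auto
    moreover have "k < 5" "l < 5" "i < 5" "j < 5" using U by auto
    ultimately show ?thesis using C0[of \<sigma> \<tau> x i j k l n] klm(2) nk assms(4) by blast
  qed
qed

lemma sup_sing: assumes "i < j" "j < 5" "p \<in> S_comp i j" shows "p \<in> sing_cone_O"
proof -
  obtain w x where p: "p = (w, x)" by (cases p)
  then have "w = 0" "Scond x i j" using assms(3) S_comp_iff by auto
  then show ?thesis unfolding sing_char p using sup_lemma[OF assms(1,2)] by auto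
qed


definition phi :: "nat \<Rightarrow> nat \<Rightarrow> nat \<Rightarrow> nat \<Rightarrow> complex \<Rightarrow> complex \<Rightarrow> complex \<Rightarrow> pt" where
  "phi i j k l y a b = (0, \<chi> t. if t = of_nat i \<or> t = of_nat j then y else if t = of_nat k then a^2
      else if t = of_nat l then b^2 else (a+b)^2)"

lemma xc_phi: assumes "n < 5" "i < 5" "j < 5" "k < 5" "l < 5"
  shows "xc (snd (phi i j k l y a b)) n = (if n = i \<or> n = j then y else if n = k then a^2 else if n = l then b^2 else (a+b)^2)"
  using assms by (simp add: phi_def xc_def of_nat5_eq)

lemma phi_in:
  assumes "i < j" "j < 5" "{0..<5} - {i, j} = {k, l, m}" "k \<noteq> l" "k \<noteq> m" "l \<noteq> m"
  shows "phi i j k l y a b \<in> S_comp i j"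
proof -
  have nk: "k \<noteq> i" "k \<noteq> j" "l \<noteq> i" "l \<noteq> j" "m \<noteq> i" "m \<noteq> j" and lt: "k < 5" "l < 5" "m < 5"
    using assms(3) by (auto simp: set_eq_iff)
  let ?x = "snd (phi i j k l y a b)"
  have "Rexp ?x i j = D3 (a^2) (b^2) ((a+b)^2)"
    unfolding Rexp_3[OF assms(3-6)] using nk lt assms(1,2,4-6) by (simp add: xc_phi)
  also have "\<dots> = 0" by (simp add: D3_factor)
  moreover have "xc ?x i = y" "xc ?x j = y" using assms(1,2) lt by (simp_all add: xc_phi)
  ultimately have "Scond ?x i j" unfolding Scond_def by simp
  then show ?thesis using S_comp_iff[of "fst (phi i j k l y a b)" ?x] by (simp add: phi_def)
qed

lemma vec5_eq: "(\<forall>n<5. xc x n = xc x' n) \<Longrightarrow> x = x'"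
proof -
  assume H: "\<forall>n<5. xc x n = xc x' n"
  have "x $ t = x' $ t" for t
  proof -
    obtain n where "n < 5" "t = of_nat n" using ex_nat5 by blast
    then show ?thesis using H unfolding xc_def by auto
  qed
  then show ?thesis by (simp add: vec_eq_iff)
qed

lemma phi_surj:
  assumes "i < j" "j < 5" "{0..<5} - {i, j} = {k, l, m}" "k \<noteq> l" "k \<noteq> m" "l \<noteq> m" "p \<in> S_comp i j"
  shows "\<exists>y a b. p = phi i j k l y a b"
proof -
  have nk: "k \<noteq> i" "k \<noteq> j" "l \<noteq> i" "l \<noteq> j" "m \<noteq> i" "m \<noteq> j" and lt: "k < 5" "l < 5" "m < 5"
    using assms(3) by (auto simp: set_eq_iff)
  obtain w x where p: "p = (w, x)" by (cases p)
  then have w: "w = 0" and S: "Scond x i j" using assms(7) S_comp_iff by auto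
  let ?s = "sx x"
  have "D3 ((?s k)^2) ((?s l)^2) ((?s m)^2) = 0"
    using S Rexp_3[OF assms(3-6)] unfolding Scond_def by (simp add: sx_sq)
  then obtain \<beta> \<gamma> where bg: "\<beta> = 1 \<or> \<beta> = -1" "\<gamma> = 1 \<or> \<gamma> = -1" "?s k + \<beta> * ?s l + \<gamma> * ?s m = 0"
    using D3_sign by blast
  have "\<gamma> * ?s m = (?s k + \<beta> * ?s l + \<gamma> * ?s m) - (?s k + \<beta> * ?s l)" by simp
  also have "\<dots> = - (?s k + \<beta> * ?s l)" unfolding bg(3) by simp
  finally have g: "\<gamma> * ?s m = - (?s k + \<beta> * ?s l)" .
  have "\<gamma> * \<gamma> = 1" using bg(2) by auto
  then have "?s m = \<gamma> * (\<gamma> * ?s m)" by (simp add: mult.assoc[symmetric])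
  then have sm: "?s m = - \<gamma> * (?s k + \<beta> * ?s l)" using g by (simp add: algebra_simps)
  have "xc x m = (?s m)^2" by (simp add: sx_sq)
  also have "\<dots> = (- \<gamma> * (?s k + \<beta> * ?s l))^2" using sm by simp
  also have "\<dots> = (?s k + \<beta> * ?s l)^2" using bg(2) by (auto simp: power_mult_distrib)
  finally have xm: "xc x m = (?s k + \<beta> * ?s l)^2" .
  have "xc x l = (?s l)^2" by (simp add: sx_sq)
  also have "\<dots> = (\<beta> * ?s l)^2" using bg(1) by (auto simp: power_mult_distrib)
  finally have xl: "xc x l = (\<beta> * ?s l)^2" .
  have xk: "xc x k = (?s k)^2" by (simp add: sx_sq)
  have "x = snd (phi i j k l (xc x i) (?s k) (\<beta> * ?s l))"
  proof (rule vec5_eq, intro allI impI)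
    fix n :: nat assume n: "n < 5"
    have "n = i \<or> n = j \<or> n \<in> {0..<5} - {i, j}" using n by auto
    then have "n = i \<or> n = j \<or> n = k \<or> n = l \<or> n = m" unfolding assms(3) by auto
    moreover have i5: "i < 5" using assms(1,2) by simp
    moreover have Sij: "xc x i = xc x j" using S unfolding Scond_def by simp
    ultimately show "xc x n = xc (snd (phi i j k l (xc x i) (?s k) (\<beta> * ?s l))) n"
      unfolding xc_phi[OF n i5 assms(2) lt(1,2)]
      using nk assms(4-6) xm xl xk by (elim disjE) simp_all
  qed
  moreover have "phi i j k l (xc x i) (?s k) (\<beta> * ?s l) = (0, snd (phi i j k l (xc x i) (?s k) (\<beta> * ?s l)))"
    by (simp add: phi_def)
  ultimately have "p = phi i j k l (xc x i) (?s k) (\<beta> * ?s l)" using p w by simp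
  then show ?thesis by blast
qed

lemma witness_pt:
  assumes "i < j" "j < 5"
  shows "\<exists>x. Scond x i j \<and> (\<forall>a b. a < 5 \<and> b < 5 \<and> a \<noteq> b \<and> xc x a = xc x b \<longrightarrow> {a, b} = {i, j})"
proof -
  obtain k l m where klm: "{0..<5} - {i, j} = {k, l, m}" "k \<noteq> l" "k \<noteq> m" "l \<noteq> m"
    using compl3[of i j] assms by (metis less_trans less_irrefl)
  have nk: "k \<noteq> i" "k \<noteq> j" "l \<noteq> i" "l \<noteq> j" "m \<noteq> i" "m \<noteq> j" and lt: "k < 5" "l < 5" "m < 5"
    using klm(1) by (auto simp: set_eq_iff)
  let ?p = "phi i j k l 25 1 2"
  let ?x = "snd ?p"
  have "?p \<in> S_comp i j" using phi_in[OF assms klm] .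
  then have S: "Scond ?x i j" using S_comp_iff[of "fst ?p" ?x] by simp
  have "{a, b} = {i, j}" if ab: "a < 5" "b < 5" "a \<noteq> b" "xc ?x a = xc ?x b" for a b
  proof -
    have cases: "n = i \<or> n = j \<or> n = k \<or> n = l \<or> n = m" if "n < 5" for n
      using klm(1) that by (auto simp: set_eq_iff)
    have v: "xc ?x n = (if n = i \<or> n = j then 25 else if n = k then 1 else if n = l then 4 else 9)" if "n < 5" for n
      using xc_phi[OF that _ _ lt(1,2), of i j 25 1 2] assms that by simp
    show ?thesis using cases[OF ab(1)] cases[OF ab(2)] v[OF ab(1)] v[OF ab(2)] ab(3,4) nk klm(2-4)
      by auto
  qed
  then show ?thesis using S by blast
qed

lemma S_comp_noninc:
  assumes "i < j" "j < 5" "k < l" "l < 5" "(i, j) \<noteq> (k, l)"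
  shows "\<not> S_comp i j \<subseteq> S_comp k l"
proof
  assume sub: "S_comp i j \<subseteq> S_comp k l"
  obtain x where x: "Scond x i j" "\<forall>a b. a < 5 \<and> b < 5 \<and> a \<noteq> b \<and> xc x a = xc x b \<longrightarrow> {a, b} = {i, j}"
    using witness_pt[OF assms(1,2)] by blast
  have "(0, x) \<in> S_comp k l" using sub x(1) S_comp_iff by blast
  then have "xc x k = xc x l" using S_comp_iff Scond_def by blast
  then have "{k, l} = {i, j}" using x(2) assms(3,4) by auto
  then show False using assms by (auto simp: doubleton_eq_iff)
qed

lemma card_S: "card {S_comp i j | i j. i < j \<and> j < 5} = 10"
proof -
  have eq: "{S_comp i j | i j. i < j \<and> j < 5} = (\<lambda>(i, j). S_comp i j) ` {(i, j). i < j \<and> j < (5::nat)}"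
    by auto
  have inj: "inj_on (\<lambda>(i, j). S_comp i j) {(i, j). i < j \<and> j < (5::nat)}"
  proof (rule inj_onI, clarify)
    fix i j k l :: nat
    assume a: "i < j" "j < 5" "k < l" "l < 5" "S_comp i j = S_comp k l"
    show "i = k \<and> j = l" using S_comp_noninc[OF a(1-4)] a(5) by auto
  qed
  have P: "{(i, j). i < j \<and> j < (5::nat)} = {(0,1),(0,2),(0,3),(0,4),(1,2),(1,3),(1,4),(2,3),(2,4),(3,4)}"
    by (auto simp: lt5)
  have "card {S_comp i j | i j. i < j \<and> j < 5} = card {(i, j). i < j \<and> j < (5::nat)}"
    unfolding eq by (rule card_image[OF inj])
  also have "\<dots> = 10" unfolding P by simp
  finally show ?thesis .
qed


lemma pf_minus: "f \<in> poly_fun \<Longrightarrow> g \<in> poly_fun \<Longrightarrow> (\<lambda>p. f p - g p) \<in> poly_fun"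
proof -
  assume f: "f \<in> poly_fun" and g: "g \<in> poly_fun"
  have "(\<lambda>p. f p + (\<lambda>p. -1) p * g p) \<in> poly_fun" by (intro poly_fun.intros f g)
  then show ?thesis by simp
qed

lemma pf_sum: "finite A \<Longrightarrow> (\<And>a. a \<in> A \<Longrightarrow> f a \<in> poly_fun) \<Longrightarrow> (\<lambda>p. \<Sum>a\<in>A. f a p) \<in> poly_fun"
proof (induction A rule: finite_induct)
  case empty
  then show ?case using poly_fun.pconst[of 0] by simp
next
  case (insert a A)
  have "(\<lambda>p. f a p + (\<Sum>a\<in>A. f a p)) \<in> poly_fun"
    using insert by (intro poly_fun.padd) auto
  then show ?case using insert by simp
qed

lemma pf_xc: "(\<lambda>p. xc (snd p) k) \<in> poly_fun" unfolding xc_def by (rule poly_fun.px)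

lemma pf_Rexp: "(\<lambda>p. Rexp (snd p) i j) \<in> poly_fun"
  unfolding Rexp_def Let_def
  by (intro pf_minus pf_sum poly_fun.pmult pf_xc finite_Diff finite_atLeastLessThan)
     (simp_all add: power2_eq_square poly_fun.pmult pf_xc)

lemma S_closed: "zariski_closed (S_comp i j)"
proof -
  let ?P = "{(\<lambda>p. fst p), (\<lambda>p. xc (snd p) i - xc (snd p) j), (\<lambda>p. Rexp (snd p) i j)}"
  have "?P \<subseteq> poly_fun" using poly_fun.pw pf_minus[OF pf_xc pf_xc] pf_Rexp by auto
  moreover have "S_comp i j = {p. \<forall>f\<in>?P. f p = 0}"
  proof (rule set_eqI)
    fix p :: pt
    obtain w x where p: "p = (w, x)" by (cases p)
    show "p \<in> S_comp i j \<longleftrightarrow> p \<in> {p. \<forall>f\<in>?P. f p = 0}"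
      unfolding p S_comp_iff Scond_def by auto
  qed
  ultimately show ?thesis unfolding zariski_closed_def by blast
qed

definition pcurve :: "(complex \<Rightarrow> pt) \<Rightarrow> bool" where
  "pcurve g \<longleftrightarrow> (\<exists>q. \<forall>t. fst (g t) = poly q t) \<and> (\<forall>k. \<exists>q. \<forall>t. snd (g t) $ k = poly q t)"

lemma pf_curve: "f \<in> poly_fun \<Longrightarrow> pcurve g \<Longrightarrow> \<exists>q. \<forall>t. f (g t) = poly q t"
proof (induction f rule: poly_fun.induct)
  case (pconst c) then show ?case by (intro exI[of _ "[:c:]"]) simp
next
  case pw then show ?case unfolding pcurve_def by simp
next
  case (px k) then show ?case unfolding pcurve_def by simp
next
  case (padd f g')
  then obtain q1 q2 where "\<forall>t. f (g t) = poly q1 t" "\<forall>t. g' (g t) = poly q2 t" by blast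
  then show ?case by (intro exI[of _ "q1 + q2"]) simp
next
  case (pmult f g')
  then obtain q1 q2 where "\<forall>t. f (g t) = poly q1 t" "\<forall>t. g' (g t) = poly q2 t" by blast
  then show ?case by (intro exI[of _ "q1 * q2"]) simp
qed

lemma pcurve_phi: "pcurve (\<lambda>t. phi i j k l (y0 + t * y1) (a0 + t * a1) (b0 + t * b1))"
  unfolding pcurve_def
proof (intro conjI allI)
  show "\<exists>q. \<forall>t. fst (phi i j k l (y0 + t * y1) (a0 + t * a1) (b0 + t * b1)) = poly q t"
    by (intro exI[of _ 0]) (simp add: phi_def)
next
  fix kk :: 5
  let ?Y = "[:y0, y1:]" and ?A = "[:a0, a1:]" and ?B = "[:b0, b1:]"
  show "\<exists>q. \<forall>t. snd (phi i j k l (y0 + t * y1) (a0 + t * a1) (b0 + t * b1)) $ kk = poly q t"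
    by (intro exI[of _ "if kk = of_nat i \<or> kk = of_nat j then ?Y else if kk = of_nat k then ?A^2
         else if kk = of_nat l then ?B^2 else (?A + ?B)^2"])
       (simp add: phi_def algebra_simps)
qed

lemma S_irred: assumes "i < j" "j < 5" shows "zariski_irreducible (S_comp i j)"
proof -
  obtain k l m where klm: "{0..<5} - {i, j} = {k, l, m}" "k \<noteq> l" "k \<noteq> m" "l \<noteq> m"
    using compl3[of i j] assms by (metis less_trans less_irrefl)
  have ne: "S_comp i j \<noteq> {}" using phi_in[OF assms klm, of 0 0 0] by blast
  have main: "S_comp i j \<subseteq> A \<or> S_comp i j \<subseteq> B"
    if A: "zariski_closed A" and B: "zariski_closed B" and sub: "S_comp i j \<subseteq> A \<union> B" for A B
  proof (rule ccontr)
    assume "\<not> (S_comp i j \<subseteq> A \<or> S_comp i j \<subseteq> B)"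
    then obtain pA pB where pA: "pA \<in> S_comp i j" "pA \<notin> A" and pB: "pB \<in> S_comp i j" "pB \<notin> B" by blast
    obtain PA where PA: "PA \<subseteq> poly_fun" "A = {p. \<forall>f\<in>PA. f p = 0}" using A unfolding zariski_closed_def by blast
    obtain PB where PB: "PB \<subseteq> poly_fun" "B = {p. \<forall>f\<in>PB. f p = 0}" using B unfolding zariski_closed_def by blast
    obtain f where f: "f \<in> PA" "f pA \<noteq> 0" using pA(2) PA(2) by blast
    obtain g where g: "g \<in> PB" "g pB \<noteq> 0" using pB(2) PB(2) by blast
    obtain yA aA bA where uA: "pA = phi i j k l yA aA bA" using phi_surj[OF assms klm pA(1)] by blast
    obtain yB aB bB where uB: "pB = phi i j k l yB aB bB" using phi_surj[OF assms klm pB(1)] by blast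
    define \<gamma> where "\<gamma> = (\<lambda>t. phi i j k l (yA + t * (yB - yA)) (aA + t * (aB - aA)) (bA + t * (bB - bA)))"
    have pc: "pcurve \<gamma>" unfolding \<gamma>_def by (rule pcurve_phi)
    obtain qf where qf: "\<forall>t. f (\<gamma> t) = poly qf t" using pf_curve[OF _ pc] f(1) PA(1) by blast
    obtain qg where qg: "\<forall>t. g (\<gamma> t) = poly qg t" using pf_curve[OF _ pc] g(1) PB(1) by blast
    have "\<gamma> t \<in> S_comp i j" for t unfolding \<gamma>_def by (rule phi_in[OF assms klm])
    then have "f (\<gamma> t) = 0 \<or> g (\<gamma> t) = 0" for t using sub PA(2) PB(2) f(1) g(1) by blast
    then have "\<forall>t. poly (qf * qg) t = 0" using qf qg by simp
    then have "qf * qg = 0" using poly_all_0_iff_0 by blast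
    moreover have "\<gamma> 0 = pA" "\<gamma> 1 = pB" unfolding \<gamma>_def uA uB by simp_all
    then have "qf \<noteq> 0" "qg \<noteq> 0" using qf qg f(2) g(2) by (metis poly_0)+
    ultimately show False by simp
  qed
  show ?thesis unfolding zariski_irreducible_def using ne main by blast
qed


theorem mainTheorem8:
  shows "sing_cone_O = (\<Union>{S_comp i j | i j. i < j \<and> j < 5})
    \<and> card {S_comp i j | i j. i < j \<and> j < 5} = 10
    \<and> (\<forall>i j. i < j \<and> j < 5 \<longrightarrow> zariski_closed (S_comp i j) \<and> zariski_irreducible (S_comp i j))
    \<and> (\<forall>i j k l. i < j \<and> j < 5 \<and> k < l \<and> l < 5 \<and> (i, j) \<noteq> (k, l)
         \<longrightarrow> \<not> S_comp i j \<subseteq> S_comp k l)"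
proof (intro conjI allI impI)
  show "sing_cone_O = (\<Union>{S_comp i j | i j. i < j \<and> j < 5})"
  proof
    show "sing_cone_O \<subseteq> \<Union>{S_comp i j | i j. i < j \<and> j < 5}" using sing_sub by blast
    show "\<Union>{S_comp i j | i j. i < j \<and> j < 5} \<subseteq> sing_cone_O" using sup_sing by blast
  qed
  show "card {S_comp i j | i j. i < j \<and> j < 5} = 10" by (rule card_S)
next
  fix i j :: nat assume "i < j \<and> j < 5"
  then show "zariski_closed (S_comp i j)" "zariski_irreducible (S_comp i j)"
    using S_closed S_irred by auto
next
  fix i j k l :: nat assume "i < j \<and> j < 5 \<and> k < l \<and> l < 5 \<and> (i, j) \<noteq> (k, l)"
  then show "\<not> S_comp i j \<subseteq> S_comp k l" using S_comp_noninc by blast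
qed

end
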